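(* Let $\mathbb{F}_2$ be the free group on $T_1,T_2$, $X=\{-1,1\}^{\mathbb{F}_2}$ with the product of uniform measures $m$ and the shift action $(gx)^h=x^{hg}$, and let $X'=\{x\in X: gx\ne x \text{ for all } g\ne e\}$. Let $g_1,\dots,g_4$ be $T_1T_2^{-1},T_1^{-1}T_2,T_2T_1^{-1},T_2^{-1}T_1$ and let $g_5,\dots,g_{16}$ be the twelve distinct elements of reduced length $4$ obtained as products of two of $g_1,\dots,g_4$. Let $B_1,\dots,B_{17}$ be Borel sets partitioning $X'$ such that for every $i\le 16$ and $x\in X'$, the points $x$ and $g_ix$ lie in different sets, and let $\kappa(x)=j$ for $x\in B_j$. For $x\in X$ let $t(x)=\{T_1x,T_2x\}$ if $x^e=1$ and $t(x)=\{T_1^{-1}x,T_2^{-1}x\}$ if $x^e=-1$, and for $x\in X'$ let $L(x)=\kappa(t(x))$. Define the secondary graph on $X$: distinct $x,y\in X'$ are adjacent iff $t(x)\cap t(y)\ne\emptyset$, and points of $X\setminus X'$ have no neighbours. Then the colouring rule "$c(x)\in L(x)$ and $c(x)\ne c(y)$ whenever $x,y$ are adjacent", with colour set $\{1,\dots,17\}$ (proper list colouring of the secondary graph), is paradoxical.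
   Context: A colouring $c:X\to\{1,\dots,17\}$ satisfies the rule if the requirement holds at $m$-almost every $x$. The rule is paradoxical if (a) some colouring (not necessarily measurable) satisfies it, and (b) there is no pair $(\mu,c)$ where $\mu$ is a finitely additive $\mathbb{F}_2$-invariant probability measure on an $\mathbb{F}_2$-invariant algebra $\mathcal{B}$ containing all $m$-measurable sets and extending $m$, and $c$ is a colouring satisfying the rule all of whose colour classes lie in $\mathcal{B}$. *)

theory Defs
  imports "HOL-Probability.Probability"
begin

datatype gen = Ga | Gb

type_synonym letter = "gen \<times> bool"  (* (s, False) = s, (s, True) = s^-1 *)

definition inv_letter :: "letter \<Rightarrow> letter" where
  "inv_letter l = (fst l, \<not> snd l)"

fun reduced :: "letter list \<Rightarrow> bool" where
  "reduced (x # y # ys) = (y \<noteq> inv_letter x \<and> reduced (y # ys))"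
| "reduced _ = True"

fun cancel :: "letter \<Rightarrow> letter list \<Rightarrow> letter list" where
  "cancel x [] = [x]"
| "cancel x (y # ys) = (if y = inv_letter x then ys else x # y # ys)"

definition wmul :: "letter list \<Rightarrow> letter list \<Rightarrow> letter list" where
  "wmul u v = foldr cancel u v"

typedef F2 = "{w :: letter list. reduced w}" morphisms word Abs_F2
  by (rule exI[of _ "[]"]) simp

definition f2mul :: "F2 \<Rightarrow> F2 \<Rightarrow> F2" where
  "f2mul g h = Abs_F2 (wmul (word g) (word h))"

definition f2one :: F2 where "f2one = Abs_F2 []"

definition f2len :: "F2 \<Rightarrow> nat" where "f2len g = length (word g)"

definition T1 :: F2 where "T1 = Abs_F2 [(Ga, False)]"
definition T2 :: F2 where "T2 = Abs_F2 [(Gb, False)]"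
definition T1i :: F2 where "T1i = Abs_F2 [(Ga, True)]"
definition T2i :: F2 where "T2i = Abs_F2 [(Gb, True)]"

section \<open>The space X = {-1,1}^F2 (True = 1, False = -1), measure and shift\<close>

definition m :: "(F2 \<Rightarrow> bool) measure" where
  "m = PiM UNIV (\<lambda>_. measure_pmf (pmf_of_set (UNIV :: bool set)))"

definition act :: "F2 \<Rightarrow> (F2 \<Rightarrow> bool) \<Rightarrow> (F2 \<Rightarrow> bool)" where
  "act g x = (\<lambda>h. x (f2mul h g))"

definition Xp :: "(F2 \<Rightarrow> bool) set" where
  "Xp = {x \<in> space m. \<forall>g. g \<noteq> f2one \<longrightarrow> act g x \<noteq> x}"

definition gs4 :: "F2 set" where
  "gs4 = {f2mul T1 T2i, f2mul T1i T2, f2mul T2 T1i, f2mul T2i T1}"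

definition gs16 :: "F2 set" where
  "gs16 = gs4 \<union> {f2mul a b | a b. a \<in> gs4 \<and> b \<in> gs4 \<and> f2len (f2mul a b) = 4}"

definition kappa :: "(nat \<Rightarrow> (F2 \<Rightarrow> bool) set) \<Rightarrow> (F2 \<Rightarrow> bool) \<Rightarrow> nat" where
  "kappa B x = (THE j. j \<in> {1..17} \<and> x \<in> B j)"

definition tset :: "(F2 \<Rightarrow> bool) \<Rightarrow> (F2 \<Rightarrow> bool) set" where
  "tset x = (if x f2one then {act T1 x, act T2 x} else {act T1i x, act T2i x})"

definition Lst :: "(nat \<Rightarrow> (F2 \<Rightarrow> bool) set) \<Rightarrow> (F2 \<Rightarrow> bool) \<Rightarrow> nat set" where
  "Lst B x = kappa B ` tset x"

definition adj :: "(F2 \<Rightarrow> bool) \<Rightarrow> (F2 \<Rightarrow> bool) \<Rightarrow> bool" where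
  "adj x y \<longleftrightarrow> x \<noteq> y \<and> x \<in> Xp \<and> y \<in> Xp \<and> tset x \<inter> tset y \<noteq> {}"

text \<open>Requirement of the rule at x (L(x) is only defined on X'; X - X' is m-null).\<close>
definition rule_at :: "(nat \<Rightarrow> (F2 \<Rightarrow> bool) set) \<Rightarrow> ((F2 \<Rightarrow> bool) \<Rightarrow> nat) \<Rightarrow> (F2 \<Rightarrow> bool) \<Rightarrow> bool" where
  "rule_at B c x \<longleftrightarrow> (x \<in> Xp \<longrightarrow> c x \<in> Lst B x) \<and> (\<forall>y. adj x y \<longrightarrow> c x \<noteq> c y)"

definition colouring :: "((F2 \<Rightarrow> bool) \<Rightarrow> nat) \<Rightarrow> bool" where
  "colouring c \<longleftrightarrow> (\<forall>x \<in> space m. c x \<in> {1..17})"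

definition satisfies_rule :: "(nat \<Rightarrow> (F2 \<Rightarrow> bool) set) \<Rightarrow> ((F2 \<Rightarrow> bool) \<Rightarrow> nat) \<Rightarrow> bool" where
  "satisfies_rule B c \<longleftrightarrow> colouring c \<and> (AE x in m. rule_at B c x)"

definition invariant_extension :: "(F2 \<Rightarrow> bool) set set \<Rightarrow> ((F2 \<Rightarrow> bool) set \<Rightarrow> real) \<Rightarrow> bool" where
  "invariant_extension A \<mu> \<longleftrightarrow>
     algebra (space m) A \<and> sets (completion m) \<subseteq> A \<and>
     (\<forall>g. \<forall>S\<in>A. act g ` S \<in> A) \<and>
     (\<forall>S\<in>A. 0 \<le> \<mu> S) \<and> \<mu> (space m) = 1 \<and>
     (\<forall>S\<in>A. \<forall>T\<in>A. S \<inter> T = {} \<longrightarrow> \<mu> (S \<union> T) = \<mu> S + \<mu> T) \<and>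
     (\<forall>g. \<forall>S\<in>A. \<mu> (act g ` S) = \<mu> S) \<and>
     (\<forall>S\<in>sets (completion m). \<mu> S = measure (completion m) S)"

definition paradoxical :: "(nat \<Rightarrow> (F2 \<Rightarrow> bool) set) \<Rightarrow> bool" where
  "paradoxical B \<longleftrightarrow>
     (\<exists>c. satisfies_rule B c) \<and>
     \<not> (\<exists>A \<mu> c. invariant_extension A \<mu> \<and> satisfies_rule B c \<and>
            (\<forall>j \<in> {1..17}. {x \<in> space m. c x = j} \<in> A))"

end

theory Submission
  imports Defs
begin


lemma inv_inv[simp]: "inv_letter (inv_letter x) = x"
  by (simp add: inv_letter_def)

lemma inv_neq[simp]: "inv_letter x \<noteq> x" "x \<noteq> inv_letter x"
  by (auto simp: inv_letter_def prod_eq_iff)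

lemma reduced_tl: "reduced (x # xs) \<Longrightarrow> reduced xs"
  by (cases xs) auto

lemma reduced_cancel: "reduced w \<Longrightarrow> reduced (cancel x w)"
  by (cases w) (auto dest: reduced_tl)

lemma wmul_Nil[simp]: "wmul [] v = v" and wmul_Cons[simp]: "wmul (x # u) v = cancel x (wmul u v)"
  by (simp_all add: wmul_def)

lemma reduced_wmul: "reduced v \<Longrightarrow> reduced (wmul u v)"
  by (induction u) (auto intro: reduced_cancel)

lemma cancel_cancel_inv: "reduced w \<Longrightarrow> cancel x (cancel (inv_letter x) w) = w"
proof (cases w)
  case (Cons y ys)
  assume r: "reduced w"
  show ?thesis
  proof (cases "y = x")
    case True
    then show ?thesis using r Cons by (cases ys) auto
  next
    case False
    then show ?thesis using Cons by auto
  qed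
qed simp

lemma wmul_cancel: "reduced v \<Longrightarrow> reduced w \<Longrightarrow> wmul (cancel x v) w = cancel x (wmul v w)"
proof (cases v)
  case (Cons y ys)
  assume r: "reduced v" "reduced w"
  show ?thesis
  proof (cases "y = inv_letter x")
    case True
    then have "wmul (cancel x v) w = wmul ys w" using Cons by simp
    also have "\<dots> = cancel x (cancel (inv_letter x) (wmul ys w))"
      using r Cons by (simp add: cancel_cancel_inv reduced_wmul reduced_tl)
    finally show ?thesis using Cons True by simp
  next
    case False
    then show ?thesis using Cons by simp
  qed
qed simp

lemma wmul_assoc: "reduced v \<Longrightarrow> reduced w \<Longrightarrow> wmul (wmul u v) w = wmul u (wmul v w)"
  by (induction u) (auto simp: wmul_cancel reduced_wmul)

lemma wmul_Nil2: "reduced u \<Longrightarrow> wmul u [] = u"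
proof (induction u)
  case (Cons x u)
  then show ?case by (cases u) (auto dest: reduced_tl)
qed simp

definition winv :: "letter list \<Rightarrow> letter list" where "winv u = rev (map inv_letter u)"

lemma winv_Cons: "winv (x # u) = winv u @ [inv_letter x]" by (simp add: winv_def)
lemma winv_Nil[simp]: "winv [] = []" by (simp add: winv_def)

lemma wmul_append: "wmul (a @ b) v = wmul a (wmul b v)" by (simp add: wmul_def)

lemma winv_wmul: "reduced v \<Longrightarrow> wmul (winv u) (wmul u v) = v"
  by (induction u arbitrary: v) (auto simp: winv_Cons wmul_append cancel_cancel_inv[of _ "inv_letter _", simplified] reduced_wmul)

lemma wmul_winv: "reduced v \<Longrightarrow> wmul u (wmul (winv u) v) = v"
  by (induction u arbitrary: v) (auto simp: winv_Cons wmul_append cancel_cancel_inv reduced_cancel)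

lemma winv_self: "reduced u \<Longrightarrow> wmul (winv u) u = []"
  using winv_wmul[of "[]" u] by (simp add: wmul_Nil2)

lemma word_reduced[simp]: "reduced (word g)"
  using word by auto

lemma word_Abs: "reduced w \<Longrightarrow> word (Abs_F2 w) = w"
  by (simp add: Abs_F2_inverse)

lemma word_f2one[simp]: "word f2one = []" by (simp add: f2one_def word_Abs)

instantiation F2 :: group_add
begin
definition "plus_F2 = f2mul"
definition "zero_F2 = f2one"
definition "uminus_F2 g = Abs_F2 (wmul (winv (word g)) [])"
definition "minus_F2 (g::F2) h = g + - h"
instance
proof
  fix a b c :: F2
  show "a + b + c = a + (b + c)"
    by (simp add: plus_F2_def f2mul_def word_Abs reduced_wmul wmul_assoc)
  show "0 + a = a"
    by (simp add: plus_F2_def f2mul_def zero_F2_def word_Abs word_inverse)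
  show "a + 0 = a"
    by (simp add: plus_F2_def f2mul_def zero_F2_def word_Abs word_inverse wmul_Nil2)
  show "- a + a = 0"
    by (simp add: plus_F2_def f2mul_def zero_F2_def uminus_F2_def word_Abs reduced_wmul
         wmul_assoc winv_self wmul_Nil2 f2one_def)
  show "a + - b = a - b" by (simp add: minus_F2_def)
qed
end

lemma f2mul_plus: "f2mul = (+)" by (simp add: plus_F2_def fun_eq_iff)
lemma f2one_zero: "f2one = 0" by (simp add: zero_F2_def)

lemma Abs_plus: "reduced u \<Longrightarrow> reduced v \<Longrightarrow> Abs_F2 u + Abs_F2 v = Abs_F2 (wmul u v)"
  by (simp add: plus_F2_def f2mul_def word_Abs)

lemma Abs_inj: "reduced u \<Longrightarrow> reduced v \<Longrightarrow> (Abs_F2 u = Abs_F2 v) = (u = v)"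
  by (simp add: Abs_F2_inject)

lemma act_act: "act g (act h x) = act (g + h) x"
  by (simp add: act_def f2mul_plus add.assoc)

lemma act_zero[simp]: "act 0 x = x"
  by (simp add: act_def f2mul_plus)

lemma act_cancel: "act (- g) (act g x) = x" "act g (act (- g) x) = x"
  by (simp_all add: act_act)



lemma red1[simp]: "reduced [l]" by simp

lemma uminus_Abs1[simp]: "- Abs_F2 [l] = Abs_F2 [inv_letter l]"
  by (simp add: uminus_F2_def word_Abs winv_def)

lemmas T_defs = T1_def T2_def T1i_def T2i_def

lemma Abs_plus_simp[simp]: "reduced u \<Longrightarrow> reduced v \<Longrightarrow> Abs_F2 u + Abs_F2 v = Abs_F2 (wmul u v)"
  by (rule Abs_plus)

lemma Abs_inj_simp[simp]: "reduced u \<Longrightarrow> reduced v \<Longrightarrow> (Abs_F2 u = Abs_F2 v) = (u = v)"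
  by (rule Abs_inj)

lemma zero_Abs: "(0::F2) = Abs_F2 []" by (simp add: zero_F2_def f2one_def)

definition Opt :: "bool \<Rightarrow> F2 set" where "Opt s = (if s then {T1, T2} else {T1i, T2i})"

lemma gs16_eq: "gs16 = {Abs_F2 [(Ga,False),(Gb,True)], Abs_F2 [(Ga,True),(Gb,False)], Abs_F2 [(Gb,False),(Ga,True)], Abs_F2 [(Gb,True),(Ga,False)], Abs_F2 [(Ga,False),(Gb,True),(Ga,False),(Gb,True)], Abs_F2 [(Ga,False),(Gb,True),(Ga,True),(Gb,False)], Abs_F2 [(Ga,False),(Gb,True),(Gb,True),(Ga,False)], Abs_F2 [(Ga,True),(Gb,False),(Ga,False),(Gb,True)], Abs_F2 [(Ga,True),(Gb,False),(Ga,True),(Gb,False)], Abs_F2 [(Ga,True),(Gb,False),(Gb,False),(Ga,True)], Abs_F2 [(Gb,False),(Ga,True),(Ga,True),(Gb,False)], Abs_F2 [(Gb,False),(Ga,True),(Gb,False),(Ga,True)], Abs_F2 [(Gb,False),(Ga,True),(Gb,True),(Ga,False)], Abs_F2 [(Gb,True),(Ga,False),(Ga,False),(Gb,True)], Abs_F2 [(Gb,True),(Ga,False),(Gb,False),(Ga,True)], Abs_F2 [(Gb,True),(Ga,False),(Gb,True),(Ga,False)]}"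
  unfolding gs16_def gs4_def f2mul_plus T_defs f2len_def
  by (auto simp: inv_letter_def word_Abs conj_disj_distribR conj_disj_distribL ex_disj_distrib)

lemma key: "a \<in> Opt sx \<Longrightarrow> b \<in> Opt sx \<Longrightarrow> a' \<in> Opt sy \<Longrightarrow> b' \<in> Opt sy \<Longrightarrow>
   a' + - b' + b + - a = 0 \<or> a' + - b' + b + - a \<in> gs16"
  unfolding gs16_eq Opt_def zero_Abs
  by (cases sx; cases sy; auto simp: T_defs inv_letter_def simp del: add_uminus_conv_diff)



lemma space_m[simp]: "space m = UNIV"
  by (auto simp: m_def space_PiM PiE_def extensional_def)

lemma Xp_act: "x \<in> Xp \<Longrightarrow> act a x \<in> Xp"
proof -
  assume x: "x \<in> Xp"
  { fix g assume g: "g \<noteq> 0" and e: "act g (act a x) = act a x"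
    have "act (- a) (act g (act a x)) = act (- a) (act a x)" using e by simp
    then have "act (- a + g + a) x = x" by (simp add: act_act add.assoc)
    moreover have "- a + g + a \<noteq> 0" using g
      by (metis add.assoc add.left_inverse add_right_imp_eq add_0_left add_0_right)
    ultimately have False using x by (auto simp: Xp_def f2one_zero) }
  then show ?thesis by (auto simp: Xp_def f2one_zero)
qed

lemma Xp_free: "x \<in> Xp \<Longrightarrow> act g x = act h x \<Longrightarrow> g = h"
proof -
  assume x: "x \<in> Xp" and e: "act g x = act h x"
  have "act (- h) (act g x) = act (- h) (act h x)" using e by simp
  then have "act (- h + g) x = x" by (simp add: act_act add.assoc[symmetric])
  then have "- h + g = 0" using x by (auto simp: Xp_def f2one_zero)
  then show "g = h" by (metis add.assoc add_0_right add.right_inverse add_0_left)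
qed

definition optL :: "bool \<Rightarrow> letter set" where
  "optL s = (if s then {(Ga,False),(Gb,False)} else {(Ga,True),(Gb,True)})"

lemma Opt_optL: "Opt s = (\<lambda>l. Abs_F2 [l]) ` optL s"
  by (auto simp: Opt_def optL_def T_defs)

lemma tset_Opt: "tset x = (\<lambda>s. act s x) ` Opt (x 0)"
  by (auto simp: tset_def Opt_def f2one_zero)

definition orb :: "(F2 \<Rightarrow> bool) \<Rightarrow> (F2 \<Rightarrow> bool) set" where "orb x = range (\<lambda>g. act g x)"
definition root :: "(F2 \<Rightarrow> bool) \<Rightarrow> (F2 \<Rightarrow> bool)" where "root x = (SOME y. y \<in> orb x)"
definition pos :: "(F2 \<Rightarrow> bool) \<Rightarrow> F2" where "pos x = (THE g. act g (root x) = x)"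

lemma orb_act: "orb (act a x) = orb x"
proof -
  have "range (\<lambda>g. act (g + a) x) = range (\<lambda>g. act g x)"
  proof (rule set_eqI, rule iffI)
    fix y assume "y \<in> range (\<lambda>g. act g x)"
    then obtain g where "y = act g x" by auto
    then have "y = act (g + - a + a) x" by (simp add: add.assoc)
    then show "y \<in> range (\<lambda>g. act (g + a) x)" by blast
  qed auto
  then show ?thesis by (simp add: orb_def act_act)
qed

lemma root_act: "root (act a x) = root x"
  by (simp add: root_def orb_act)

lemma root_in: "root x \<in> orb x"
  unfolding root_def by (rule someI[of _ x]) (simp add: orb_def image_iff, metis act_zero)

lemma pos: assumes x: "x \<in> Xp" shows "act (pos x) (root x) = x" and "\<And>g. act g (root x) = x \<Longrightarrow> pos x = g"
proof -
  obtain k where k: "root x = act k x" using root_in[of x] by (auto simp: orb_def)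
  have r: "root x \<in> Xp" using k x Xp_act by simp
  have ex: "act (- k) (root x) = x" using k by (simp add: act_cancel)
  have u: "\<And>g. act g (root x) = x \<Longrightarrow> g = - k" using Xp_free[OF r] ex by metis
  have "pos x = - k" unfolding pos_def using ex u by blast
  then show "act (pos x) (root x) = x" using ex by simp
  show "\<And>g. act g (root x) = x \<Longrightarrow> pos x = g" using \<open>pos x = - k\<close> u by metis
qed

definition sel :: "(F2 \<Rightarrow> bool) \<Rightarrow> letter" where
  "sel x = (SOME l. l \<in> optL (x 0) \<and> (word (pos x) = [] \<or> hd (word (pos x)) \<noteq> inv_letter l))"

lemma sel: "sel x \<in> optL (x 0) \<and> (word (pos x) = [] \<or> hd (word (pos x)) \<noteq> inv_letter (sel x))"
  unfolding sel_def
proof (rule someI_ex)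
  show "\<exists>l. l \<in> optL (x 0) \<and> (word (pos x) = [] \<or> hd (word (pos x)) \<noteq> inv_letter l)"
  proof (cases "hd (word (pos x)) = (Ga, x 0)")
    case True
    then show ?thesis by (intro exI[of _ "(Gb, \<not> x 0)"]) (auto simp: optL_def inv_letter_def)
  next
    case False
    then show ?thesis by (intro exI[of _ "(Ga, \<not> x 0)"]) (auto simp: optL_def inv_letter_def)
  qed
qed

definition phi :: "(F2 \<Rightarrow> bool) \<Rightarrow> (F2 \<Rightarrow> bool)" where "phi x = act (Abs_F2 [sel x]) x"

lemma word_prepend: "word g = [] \<or> hd (word g) \<noteq> inv_letter l \<Longrightarrow> word (Abs_F2 [l] + g) = l # word g"
proof -
  assume h: "word g = [] \<or> hd (word g) \<noteq> inv_letter l"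
  have "Abs_F2 [l] + g = Abs_F2 [l] + Abs_F2 (word g)" by (simp add: word_inverse)
  also have "\<dots> = Abs_F2 (cancel l (word g))" by (simp add: Abs_plus)
  also have "cancel l (word g) = l # word g" using h by (cases "word g") auto
  finally have e: "Abs_F2 [l] + g = Abs_F2 (l # word g)" .
  have "reduced (l # word g)" using h word_reduced[of g] by (cases "word g") auto
  then show ?thesis using e by (simp add: word_Abs)
qed

lemma phi_tset: "phi x \<in> tset x"
  using sel[of x] by (auto simp: phi_def tset_Opt Opt_optL)

lemma phi_inj: assumes "x \<in> Xp" "y \<in> Xp" "phi x = phi y" shows "x = y"
proof -
  have rx: "root (phi x) = root x" "root (phi y) = root y" by (simp_all add: phi_def root_act)
  then have r: "root x = root y" using assms by simp
  have px: "pos (phi x) = Abs_F2 [sel x] + pos x"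
    using assms(1) Xp_act pos by (metis act_act phi_def rx(1))
  have py: "pos (phi y) = Abs_F2 [sel y] + pos y"
    using assms(2) Xp_act pos by (metis act_act phi_def rx(2))
  have "sel x # word (pos x) = sel y # word (pos y)"
    using px py assms(3) word_prepend sel by metis
  then have "pos x = pos y" by (simp add: word_inject)
  then show ?thesis using pos(1)[OF assms(1)] pos(1)[OF assms(2)] r by metis
qed

lemma kappa: assumes cover: "(\<Union>j\<in>{1..17}. B j) = Xp"
    and disj: "\<And>j k. j \<in> {1..17} \<Longrightarrow> k \<in> {1..17} \<Longrightarrow> j \<noteq> k \<Longrightarrow> B j \<inter> B k = {}"
    and u: "u \<in> Xp"
  shows "kappa B u \<in> {1..17}" "u \<in> B (kappa B u)" "\<And>j. j \<in> {1..17} \<Longrightarrow> u \<in> B j \<Longrightarrow> kappa B u = j"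
proof -
  obtain j where j: "j \<in> {1..17}" "u \<in> B j" using u cover by blast
  have un: "\<And>k. k \<in> {1..17} \<and> u \<in> B k \<Longrightarrow> k = j" using j disj by blast
  have "kappa B u = j" unfolding kappa_def using j un by blast
  then show "kappa B u \<in> {1..17}" "u \<in> B (kappa B u)" "\<And>k. k \<in> {1..17} \<Longrightarrow> u \<in> B k \<Longrightarrow> kappa B u = k"
    using j un by auto
qed

lemma partA:
  fixes B :: "nat \<Rightarrow> (F2 \<Rightarrow> bool) set"
  assumes disj: "\<And>j k. j \<in> {1..17} \<Longrightarrow> k \<in> {1..17} \<Longrightarrow> j \<noteq> k \<Longrightarrow> B j \<inter> B k = {}"
    and cover: "(\<Union>j\<in>{1..17}. B j) = Xp"
    and sep: "\<And>g x j. g \<in> gs16 \<Longrightarrow> j \<in> {1..17} \<Longrightarrow> x \<in> Xp \<Longrightarrow> \<not> (x \<in> B j \<and> act g x \<in> B j)"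
  shows "\<exists>c. satisfies_rule B c"
proof -
  define c where "c x = (if x \<in> Xp then kappa B (phi x) else 1)" for x
  have K1: "kappa B u \<in> {1..17}" if "u \<in> Xp" for u
    by (rule kappa(1)[of B]) (rule cover, rule disj, assumption+, rule that)
  have K2: "u \<in> B (kappa B u)" if "u \<in> Xp" for u
    by (rule kappa(2)[of B]) (rule cover, rule disj, assumption+, rule that)
  note K = K1 K2
  have phiX: "x \<in> Xp \<Longrightarrow> phi x \<in> Xp" for x by (simp add: phi_def Xp_act)
  have col: "colouring c" unfolding colouring_def c_def using K(1) phiX by auto
  have rule: "rule_at B c x" for x
  proof -
    have "c x \<noteq> c y" if adj: "adj x y" for y
    proof
      assume eq: "c x = c y"
      have x: "x \<in> Xp" and y: "y \<in> Xp" and xy: "x \<noteq> y" and t: "tset x \<inter> tset y \<noteq> {}"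
        using adj by (auto simp: adj_def)
      obtain z where z: "z \<in> tset x" "z \<in> tset y" using t by auto
      obtain b where b: "b \<in> Opt (x 0)" "z = act b x" using z(1) by (auto simp: tset_Opt)
      obtain b' where b': "b' \<in> Opt (y 0)" "z = act b' y" using z(2) by (auto simp: tset_Opt)
      obtain a where a: "a \<in> Opt (x 0)" "phi x = act a x" using phi_tset[of x] by (auto simp: tset_Opt)
      obtain a' where a': "a' \<in> Opt (y 0)" "phi y = act a' y" using phi_tset[of y] by (auto simp: tset_Opt)
      have "y = act (- b') z" using b'(2) by (simp add: act_cancel)
      then have "phi y = act a' (act (- b') (act b (act (- a) (phi x))))"
        using a a' b by (simp add: act_cancel)
      then have pe: "phi y = act (a' + - b' + b + - a) (phi x)" by (simp only: act_act add.assoc)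
      let ?j = "kappa B (phi x)"
      have j: "?j \<in> {1..17}" "phi x \<in> B ?j" using K phiX x by auto
      have "phi y \<in> B ?j" using eq K(2)[OF phiX[OF y]] x y by (simp add: c_def)
      from key[OF a(1) b(1) a'(1) b'(1)] show False
      proof
        assume "a' + - b' + b + - a = 0"
        then have "phi y = phi x" using pe by simp
        then show False using phi_inj x y xy by metis
      next
        assume "a' + - b' + b + - a \<in> gs16"
        then show False using sep[OF _ j(1) phiX[OF x]] j(2) \<open>phi y \<in> B ?j\<close> pe by metis
      qed
    qed
    moreover have "x \<in> Xp \<Longrightarrow> c x \<in> Lst B x"
      using phi_tset[of x] by (auto simp: c_def Lst_def)
    ultimately show ?thesis by (auto simp: rule_at_def)
  qed
  have "satisfies_rule B c" unfolding satisfies_rule_def using col rule by auto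
  then show ?thesis by blast
qed



instance gen :: countable
  by (rule countable_classI[of "\<lambda>g. case g of Ga \<Rightarrow> 0 | Gb \<Rightarrow> Suc 0"]) (auto split: gen.splits)

instance F2 :: countable
  by (rule countable_classI[of "\<lambda>g. to_nat (word g)"]) (simp add: word_inject)

abbreviation "U \<equiv> measure_pmf (pmf_of_set (UNIV :: bool set))"

interpretation P: product_prob_space "\<lambda>_::F2. U" "UNIV::F2 set"
  by unfold_locales

lemma sets_U[simp]: "sets U = UNIV" by simp

lemma emeasure_U_single: "emeasure U {b} = ennreal (1/2)"
  by (simp add: emeasure_pmf_single)

lemma meas_coord: "{x. x h} \<in> sets m"
proof -
  have "{x \<in> space m. x h \<in> {True}} \<in> sets m" unfolding m_def
    by (rule sets_Collect_single') auto
  then show ?thesis by simp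
qed

lemma meas_act: "act s \<in> measurable m m"
  unfolding m_def act_def
  by (rule measurable_PiM_single') (auto simp: space_PiM PiE_def extensional_def)

lemma E_meas: "finite J \<Longrightarrow> {x. \<forall>j\<in>J. x j \<in> X j} \<in> sets m"
proof -
  assume J: "finite J"
  have "{x \<in> space m. \<forall>j\<in>J. x j \<in> X j} \<in> sets m" unfolding m_def
    by (rule sets.sets_Collect_countable_Ball) (rule sets_Collect_single', auto)
  then show ?thesis by simp
qed

lemma E_measure: "finite J \<Longrightarrow> measure m {x. \<forall>j\<in>J. x j \<in> {t j}} = (1/2) ^ card J"
proof -
  assume J: "finite J"
  have "emeasure m {x \<in> space m. \<forall>j\<in>J. x j \<in> {t j}} = (\<Prod>j\<in>J. emeasure U {t j})"
    unfolding m_def by (rule P.emeasure_PiM_Collect) (use J in auto)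
  also have "\<dots> = ennreal ((1/2) ^ card J)"
    unfolding emeasure_U_single prod_constant by (rule ennreal_power) simp
  finally show ?thesis by (simp add: measure_def)
qed



lemma prob_m: "prob_space m"
  unfolding m_def by (rule P.prob_space_axioms)

interpretation M: prob_space m by (rule prob_m)

lemma SH_bound:
  assumes H: "finite H" and inj: "inj_on \<rho> H" and dis: "\<rho> ` H \<inter> H = {}"
  shows "measure m {x. \<forall>h\<in>H. x h = x (\<rho> h)} \<le> (1/2) ^ card H"
proof -
  define J where "J = H \<union> \<rho> ` H"
  define t where "t s j = (if j \<in> H then s j else s (the_inv_into H \<rho> j))" for s :: "F2 \<Rightarrow> bool" and j
  define E where "E s = {x. \<forall>j\<in>J. x j \<in> {t s j}}" for s
  let ?S = "PiE H (\<lambda>_. UNIV :: bool set)"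
  have J: "finite J" using H by (simp add: J_def)
  have cJ: "card J = card H + card H"
    unfolding J_def using H dis inj by (subst card_Un_disjoint) (auto simp: card_image)
  have fS: "finite ?S" using H by (simp add: finite_PiE)
  have cS: "card ?S = 2 ^ card H" using H by (simp add: card_PiE)
  have sub: "{x. \<forall>h\<in>H. x h = x (\<rho> h)} \<subseteq> (\<Union>s\<in>?S. E s)"
  proof
    fix x :: "F2 \<Rightarrow> bool" assume x: "x \<in> {x. \<forall>h\<in>H. x h = x (\<rho> h)}"
    have "restrict x H \<in> ?S" by simp
    moreover have "x \<in> E (restrict x H)"
      unfolding E_def t_def J_def using x dis inj
      by (auto simp: the_inv_into_f_f)
    ultimately show "x \<in> (\<Union>s\<in>?S. E s)" by blast
  qed
  have Em: "E s \<in> sets m" for s unfolding E_def by (rule E_meas[OF J])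
  have "measure m {x. \<forall>h\<in>H. x h = x (\<rho> h)} \<le> measure m (\<Union>s\<in>?S. E s)"
    by (rule M.finite_measure_mono[OF sub]) (use fS Em in auto)
  also have "\<dots> \<le> (\<Sum>s\<in>?S. measure m (E s))"
    by (rule M.finite_measure_subadditive_finite) (use fS Em in auto)
  also have "\<dots> = (\<Sum>s\<in>?S. (1/2) ^ card J)"
    unfolding E_def using E_measure[OF J] by simp
  also have "\<dots> = 2 ^ card H * (1/2) ^ (card H + card H)"
    using cS cJ by simp
  also have "\<dots> = (1/2) ^ card H"
    by (simp add: power_add power_mult_distrib[symmetric])
  finally show ?thesis .
qed



lemma reduced_replicate: "reduced (replicate n (Ga, False))"
proof (induction n)
  case (Suc n)
  then show ?case by (cases n) (simp_all add: inv_letter_def)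
qed simp

lemma infinite_F2: "infinite (UNIV :: F2 set)"
proof -
  have "inj (\<lambda>n. Abs_F2 (replicate n (Ga, False)))"
  proof (rule injI)
    fix a b :: nat assume "Abs_F2 (replicate a (Ga, False)) = Abs_F2 (replicate b (Ga, False))"
    then have "replicate a (Ga, False) = replicate b (Ga, False)"
      using Abs_inj[OF reduced_replicate reduced_replicate] by blast
    then show "a = b" by (metis length_replicate)
  qed
  then have "infinite (range (\<lambda>n. Abs_F2 (replicate n (Ga, False))))"
    by (rule range_inj_infinite)
  then show ?thesis by (rule infinite_super[OF subset_UNIV])
qed

lemma exists_H: assumes g: "g \<noteq> (0::F2)"
  shows "\<exists>H. finite H \<and> card H = n \<and> (\<lambda>h. h + g) ` H \<inter> H = {}"
proof (induction n)
  case 0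
  show ?case by (rule exI[of _ "{}"]) simp
next
  case (Suc n)
  from Suc.IH obtain H where H: "finite H" "card H = n" "(\<lambda>h. h + g) ` H \<inter> H = {}" by (elim exE conjE)
  have fin: "finite (H \<union> (\<lambda>h. h + g) ` H \<union> (\<lambda>h. h - g) ` H)" using H(1) by (intro finite_UnI finite_imageI)
  obtain h where h: "h \<notin> H \<union> (\<lambda>h. h + g) ` H \<union> (\<lambda>h. h - g) ` H"
    using ex_new_if_finite[OF infinite_F2 fin] by (elim exE)
  have hg: "h + g \<noteq> h"
  proof
    assume "h + g = h"
    then have "h + g = h + 0" by simp
    then have "g = 0" by (rule add_left_imp_eq)
    then show False using g by simp
  qed
  have h1: "h + g \<notin> H"
  proof
    assume "h + g \<in> H"
    then have "h + g - g \<in> (\<lambda>h. h - g) ` H" by blast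
    then show False using h by simp
  qed
  have h2: "h \<notin> (\<lambda>h. h + g) ` H" using h by blast
  have "(\<lambda>h. h + g) ` insert h H \<inter> insert h H = {}"
  proof -
    have "(\<lambda>h. h + g) ` insert h H = insert (h + g) ((\<lambda>h. h + g) ` H)" by simp
    moreover have "(h + g) \<notin> insert h H" using h1 hg by simp
    moreover have "h \<notin> (\<lambda>h. h + g) ` H" by (rule h2)
    ultimately show ?thesis using H(3) by auto
  qed
  moreover have "card (insert h H) = Suc n" using H h by simp
  moreover have "finite (insert h H)" using H by simp
  ultimately show ?case by (intro exI[of _ "insert h H"] conjI)
qed



lemma Fix_eq: "{x. act g x = x} = {x \<in> space m. \<forall>h. x (h + g) = x h}"
  by (auto simp: act_def fun_eq_iff f2mul_plus)

lemma Fix_null: assumes g: "g \<noteq> 0" shows "{x. act g x = x} \<in> null_sets m"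
proof -
  have pair: "{x \<in> space m. x (h + g) = x h} \<in> sets m" for h
  proof -
    have e: "{x \<in> space m. x (h + g) = x h} = ({x. x (h + g)} \<inter> {x. x h}) \<union> ((space m - {x. x (h + g)}) \<inter> (space m - {x. x h}))"
      by auto
    show ?thesis unfolding e by (intro sets.Un sets.Int sets.Diff sets.top meas_coord)
  qed
  have meas: "{x. act g x = x} \<in> sets m"
    unfolding Fix_eq by (rule sets.sets_Collect_countable_All) (rule pair)
  have le: "measure m {x. act g x = x} \<le> (1/2) ^ n" for n
  proof -
    obtain H where H: "finite H" "card H = n" "(\<lambda>h. h + g) ` H \<inter> H = {}" using exists_H[OF g] by blast
    have "{x. act g x = x} \<subseteq> {x. \<forall>h\<in>H. x h = x (h + g)}" by (auto simp: Fix_eq)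
    moreover have "{x. \<forall>h\<in>H. x h = x (h + g)} \<in> sets m"
    proof -
      have e: "{x. \<forall>h\<in>H. x h = x (h + g)} = {x \<in> space m. \<forall>h\<in>H. x (h + g) = x h}" by auto
      show ?thesis unfolding e by (rule sets.sets_Collect_countable_Ball) (rule pair)
    qed
    ultimately have "measure m {x. act g x = x} \<le> measure m {x. \<forall>h\<in>H. x h = x (h + g)}"
      by (rule M.finite_measure_mono)
    also have "\<dots> \<le> (1/2) ^ card H"
      by (rule SH_bound[OF H(1) _ H(3)]) (simp add: inj_on_def)
    finally show ?thesis using H by simp
  qed
  have "measure m {x. act g x = x} = 0"
  proof (rule ccontr)
    assume "measure m {x. act g x = x} \<noteq> 0"
    then have "0 < measure m {x. act g x = x}" using measure_nonneg[of m] by (simp add: order_less_le)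
    then obtain n where "(1/2::real) ^ n < measure m {x. act g x = x}"
      using real_arch_pow_inv[of "measure m {x. act g x = x}" "1/2"] by auto
    then show False using le[of n] by simp
  qed
  then show ?thesis using meas by (simp add: null_sets_def M.emeasure_eq_measure)
qed

lemma nonfree_null: "UNIV - Xp \<in> null_sets m"
proof -
  have "UNIV - Xp = (\<Union>g. if g = 0 then {} else {x. act g x = x})"
    by (auto simp: Xp_def f2one_zero split: if_splits)
  moreover have "(\<Union>g. if g = 0 then {} else {x. act g x = x}) \<in> null_sets m"
    by (rule null_sets_UN) (simp add: Fix_null)
  ultimately show ?thesis by simp
qed



definition Z0 :: "(F2 \<Rightarrow> bool) set" where
  "Z0 = {z. \<not> z T1i \<and> \<not> z T2i \<and> z T1 \<and> z T2}"

lemma T_distinct: "T1 \<noteq> T2" "T1 \<noteq> T1i" "T1 \<noteq> T2i" "T2 \<noteq> T1i" "T2 \<noteq> T2i" "T1i \<noteq> T2i"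
  by (simp_all add: T_defs)

lemma T_inv: "T1i + T1 = 0" "T2i + T2 = 0" "T1 + T1i = 0" "T2 + T2i = 0"
  by (simp_all add: T_defs zero_Abs inv_letter_def)

lemma Z0_meas: "Z0 \<in> sets m" and Z0_measure: "measure m Z0 = 1/16"
proof -
  define J where "J = {T1i, T2i, T1, T2}"
  define t where "t j = (j = T1 \<or> j = T2)" for j
  have Z: "Z0 = {x. \<forall>j\<in>J. x j \<in> {t j}}"
    using T_distinct by (auto simp: Z0_def J_def t_def)
  have J: "finite J" by (simp add: J_def)
  have cJ: "card J = 4" using T_distinct by (simp add: J_def)
  show "Z0 \<in> sets m" unfolding Z by (rule E_meas[OF J])
  show "measure m Z0 = 1/16" unfolding Z E_measure[OF J] cJ by (simp add: power_one_over)
qed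

lemma Xp_meas: fixes B :: "nat \<Rightarrow> (F2 \<Rightarrow> bool) set" assumes borel: "\<And>j. j \<in> {1..17} \<Longrightarrow> B j \<in> sets m"
    and cover: "(\<Union>j\<in>{1..17}. B j) = Xp"
  shows "Xp \<in> sets m"
proof -
  have "(\<Union>j\<in>{1..17::nat}. B j) \<in> sets m" by (rule sets.finite_UN) (use borel in auto)
  then show ?thesis using cover by simp
qed

lemma Z0_Xp_pos: assumes "Xp \<in> sets m" shows "0 < measure m (Xp \<inter> Z0)"
proof -
  have "Xp \<inter> Z0 = Z0 - (UNIV - Xp)" by auto
  then have "measure m (Xp \<inter> Z0) = measure m Z0"
    using measure_Diff_null_set[OF Z0_meas nonfree_null] by simp
  then show ?thesis using Z0_measure by simp
qed

lemma partB:
  fixes B :: "nat \<Rightarrow> (F2 \<Rightarrow> bool) set"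
  assumes borel: "\<And>j. j \<in> {1..17} \<Longrightarrow> B j \<in> sets m"
    and disj: "\<And>j k. j \<in> {1..17} \<Longrightarrow> k \<in> {1..17} \<Longrightarrow> j \<noteq> k \<Longrightarrow> B j \<inter> B k = {}"
    and cover: "(\<Union>j\<in>{1..17}. B j) = Xp"
  shows "\<not> (\<exists>A \<mu> c. invariant_extension A \<mu> \<and> satisfies_rule B c \<and>
            (\<forall>j \<in> {1..17}. {x \<in> space m. c x = j} \<in> A))"
proof
  assume "\<exists>A \<mu> c. invariant_extension A \<mu> \<and> satisfies_rule B c \<and>
            (\<forall>j \<in> {1..17}. {x \<in> space m. c x = j} \<in> A)"
  then obtain A \<mu> c where ie: "invariant_extension A \<mu>" and sat: "satisfies_rule B c"
    and cls: "\<And>j. j \<in> {1..17} \<Longrightarrow> {x. c x = j} \<in> A" by auto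
  have alg: "algebra UNIV A" and compl: "sets (completion m) \<subseteq> A"
    and actA: "\<And>g S. S \<in> A \<Longrightarrow> act g ` S \<in> A"
    and nn: "\<And>S. S \<in> A \<Longrightarrow> 0 \<le> \<mu> S"
    and add: "\<And>S T. S \<in> A \<Longrightarrow> T \<in> A \<Longrightarrow> S \<inter> T = {} \<Longrightarrow> \<mu> (S \<union> T) = \<mu> S + \<mu> T"
    and inv: "\<And>g S. S \<in> A \<Longrightarrow> \<mu> (act g ` S) = \<mu> S"
    and ext: "\<And>S. S \<in> sets (completion m) \<Longrightarrow> \<mu> S = measure (completion m) S"
    using ie unfolding invariant_extension_def by auto
  interpret A: algebra UNIV A by (rule alg)
  have smA: "S \<in> A" if "S \<in> sets m" for S using compl sets_completionI_sets[OF that] by blast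
  have mum: "\<mu> S = measure m S" if "S \<in> sets m" for S
    using ext[OF sets_completionI_sets[OF that]] that by simp
  have mono: "\<mu> S \<le> \<mu> T" if "S \<in> A" "T \<in> A" "S \<subseteq> T" for S T
  proof -
    have "T = S \<union> (T - S)" using that by auto
    then have "\<mu> T = \<mu> S + \<mu> (T - S)" using add[of S "T - S"] that by auto
    moreover have "0 \<le> \<mu> (T - S)" using nn that by auto
    ultimately show ?thesis by simp
  qed
  have add4: "\<mu> (a \<union> b \<union> c \<union> d) = \<mu> a + \<mu> b + \<mu> c + \<mu> d"
    if "a \<in> A" "b \<in> A" "c \<in> A" "d \<in> A" "a \<inter> b = {}" "a \<inter> c = {}" "a \<inter> d = {}"
       "b \<inter> c = {}" "b \<inter> d = {}" "c \<inter> d = {}" for a b c d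
  proof -
    have "\<mu> (a \<union> b \<union> c \<union> d) = \<mu> (a \<union> b \<union> c) + \<mu> d"
      using that by (intro add) auto
    also have "\<mu> (a \<union> b \<union> c) = \<mu> (a \<union> b) + \<mu> c"
      using that by (intro add) auto
    also have "\<mu> (a \<union> b) = \<mu> a + \<mu> b"
      using that by (intro add) auto
    finally show ?thesis .
  qed
  have K1: "kappa B u \<in> {1..17}" if "u \<in> Xp" for u
    by (rule kappa(1)[of B]) (rule cover, rule disj, assumption+, rule that)
  have K2: "u \<in> B (kappa B u)" if "u \<in> Xp" for u
    by (rule kappa(2)[of B]) (rule cover, rule disj, assumption+, rule that)
  have Xm: "Xp \<in> sets m" by (rule Xp_meas[of B]) (use borel cover in auto)
  from sat have "AE x in m. rule_at B c x" by (simp add: satisfies_rule_def)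
  then obtain N where N: "{x \<in> space m. \<not> rule_at B c x} \<subseteq> N" "emeasure m N = 0" "N \<in> sets m"
    by (rule AE_E)
  define G where "G = Xp - N"
  have Gm: "G \<in> sets m" using Xm N(3) by (simp add: G_def sets.Diff)
  have Gr: "rule_at B c x" if "x \<in> G" for x using that N(1) by (auto simp: G_def)
  have GX: "x \<in> Xp" if "x \<in> G" for x using that by (simp add: G_def)
  define R where "R s = {x. \<exists>j\<in>{1..17}. c x = j \<and> act s x \<in> B j}" for s
  have RA: "R s \<in> A" for s
  proof -
    have "R s = (\<Union>j\<in>{1..17::nat}. {x. c x = j} \<inter> (act s -` B j \<inter> space m))"
      by (auto simp: R_def)
    also have "\<dots> \<in> A"
    proof (rule A.finite_UN)
      fix j :: nat assume j: "j \<in> {1..17}"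
      have "act s -` B j \<inter> space m \<in> sets m" by (rule measurable_sets[OF meas_act borel[OF j]])
      then show "{x. c x = j} \<inter> (act s -` B j \<inter> space m) \<in> A"
        using cls[OF j] smA by (intro A.Int) auto
    qed simp
    finally show ?thesis .
  qed
  define E where "E = {x::F2 \<Rightarrow> bool. x 0}"
  have EA: "E \<in> A" unfolding E_def by (rule smA[OF meas_coord])
  have GA: "G \<in> A" by (rule smA[OF Gm])
  define Q1 where "Q1 = G \<inter> E \<inter> R T1"
  define Q2 where "Q2 = G \<inter> E \<inter> R T2 - Q1"
  define Q3 where "Q3 = (G - E) \<inter> R T1i"
  define Q4 where "Q4 = (G - E) \<inter> R T2i - Q3"
  have QA: "Q1 \<in> A" "Q2 \<in> A" "Q3 \<in> A" "Q4 \<in> A"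
    unfolding Q1_def Q2_def Q3_def Q4_def using GA EA RA by (simp_all add: A.Int A.Diff)
  have inR: "x \<in> R s" if "x \<in> G" "c x = kappa B (act s x)" for x s
  proof -
    have "act s x \<in> Xp" using Xp_act GX that(1) by blast
    then show ?thesis using K1 K2 that(2) by (auto simp: R_def)
  qed
  have cov: "G = Q1 \<union> Q2 \<union> Q3 \<union> Q4"
  proof
    show "G \<subseteq> Q1 \<union> Q2 \<union> Q3 \<union> Q4"
    proof
      fix x assume x: "x \<in> G"
      have "c x \<in> Lst B x" using Gr[OF x] GX[OF x] by (simp add: rule_at_def)
      then obtain s where s: "s \<in> Opt (x 0)" "c x = kappa B (act s x)"
        by (auto simp: Lst_def tset_Opt)
      then have xR: "x \<in> R s" using inR x by blast
      show "x \<in> Q1 \<union> Q2 \<union> Q3 \<union> Q4"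
        using s(1) xR x by (cases "x 0") (auto simp: Opt_def Q1_def Q2_def Q3_def Q4_def E_def)
    qed
  qed (auto simp: Q1_def Q2_def Q3_def Q4_def)
  have inj2: "x = y" if H: "x \<in> G" "y \<in> G" "s \<in> Opt (x 0)" "s' \<in> Opt (y 0)" "x \<in> R s" "y \<in> R s'"
    "act s x = act s' y" for x y s s'
  proof (rule ccontr)
    assume xy: "x \<noteq> y"
    have "act s x \<in> tset x" using H(3) by (auto simp: tset_Opt)
    moreover have "act s' y \<in> tset y" using H(4) by (auto simp: tset_Opt)
    ultimately have "adj x y" using xy GX H by (auto simp: adj_def)
    then have ne: "c x \<noteq> c y" using Gr[OF H(1)] by (simp add: rule_at_def)
    obtain j where j: "j \<in> {1..17}" "c x = j" "act s x \<in> B j" using H(5) by (auto simp: R_def)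
    obtain k where k: "k \<in> {1..17}" "c y = k" "act s' y \<in> B k" using H(6) by (auto simp: R_def)
    have "j = k" using disj[OF j(1) k(1)] j(3) k(3) H(7) by auto
    then show False using ne j k by simp
  qed
  have disjI: "act s ` P \<inter> act s' ` P' = {}"
    if "P \<subseteq> G" "P' \<subseteq> G" "\<And>x. x \<in> P \<Longrightarrow> s \<in> Opt (x 0) \<and> x \<in> R s"
       "\<And>y. y \<in> P' \<Longrightarrow> s' \<in> Opt (y 0) \<and> y \<in> R s'" "P \<inter> P' = {}" for P P' s s'
  proof (rule ccontr)
    assume "act s ` P \<inter> act s' ` P' \<noteq> {}"
    then obtain x y where xy: "x \<in> P" "y \<in> P'" "act s x = act s' y" by auto
    have "x = y" using inj2[of x y s s'] xy that by auto
    then show False using xy that(5) by auto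
  qed
  have P1: "x \<in> Q1 \<Longrightarrow> T1 \<in> Opt (x 0) \<and> x \<in> R T1" for x by (auto simp: Q1_def E_def Opt_def)
  have P2: "x \<in> Q2 \<Longrightarrow> T2 \<in> Opt (x 0) \<and> x \<in> R T2" for x by (auto simp: Q2_def E_def Opt_def)
  have P3: "x \<in> Q3 \<Longrightarrow> T1i \<in> Opt (x 0) \<and> x \<in> R T1i" for x by (auto simp: Q3_def E_def Opt_def)
  have P4: "x \<in> Q4 \<Longrightarrow> T2i \<in> Opt (x 0) \<and> x \<in> R T2i" for x by (auto simp: Q4_def E_def Opt_def)
  have QG: "Q1 \<subseteq> G" "Q2 \<subseteq> G" "Q3 \<subseteq> G" "Q4 \<subseteq> G" by (auto simp: Q1_def Q2_def Q3_def Q4_def)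
  have Qd: "Q1 \<inter> Q2 = {}" "Q1 \<inter> Q3 = {}" "Q1 \<inter> Q4 = {}" "Q2 \<inter> Q3 = {}" "Q2 \<inter> Q4 = {}" "Q3 \<inter> Q4 = {}"
    by (auto simp: Q1_def Q2_def Q3_def Q4_def)
  define I1 where "I1 = act T1 ` Q1"
  define I2 where "I2 = act T2 ` Q2"
  define I3 where "I3 = act T1i ` Q3"
  define I4 where "I4 = act T2i ` Q4"
  have IA: "I1 \<in> A" "I2 \<in> A" "I3 \<in> A" "I4 \<in> A" unfolding I1_def I2_def I3_def I4_def using QA actA by auto
  have Id: "I1 \<inter> I2 = {}" "I1 \<inter> I3 = {}" "I1 \<inter> I4 = {}" "I2 \<inter> I3 = {}" "I2 \<inter> I4 = {}" "I3 \<inter> I4 = {}"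
    unfolding I1_def I2_def I3_def I4_def
    by (rule disjI; (rule QG Qd | erule P1 P2 P3 P4))+
  have Imu: "\<mu> I1 = \<mu> Q1" "\<mu> I2 = \<mu> Q2" "\<mu> I3 = \<mu> Q3" "\<mu> I4 = \<mu> Q4"
    unfolding I1_def I2_def I3_def I4_def using QA inv by auto
  have actX: "act s x \<in> Xp" if "x \<in> Q1 \<union> Q2 \<union> Q3 \<union> Q4" for x s
    using that Xp_act GX QG by blast
  have ev: "act s x t = x (t + s)" for s x t by (simp add: act_def f2mul_plus)
  have Isub: "I1 \<union> I2 \<union> I3 \<union> I4 \<subseteq> Xp - Z0"
    unfolding I1_def I2_def I3_def I4_def
    using actX by (auto simp: Z0_def ev T_inv Q1_def Q2_def Q3_def Q4_def E_def)
  have XZA: "Xp - Z0 \<in> A" by (rule smA) (use Xm Z0_meas in auto)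
  have "\<mu> G = \<mu> Q1 + \<mu> Q2 + \<mu> Q3 + \<mu> Q4"
    unfolding cov by (rule add4) (use QA Qd in auto)
  also have "\<dots> = \<mu> (I1 \<union> I2 \<union> I3 \<union> I4)"
    unfolding Imu[symmetric] by (rule add4[symmetric]) (use IA Id in auto)
  also have "\<dots> \<le> \<mu> (Xp - Z0)"
    by (rule mono[OF _ XZA Isub]) (use IA in auto)
  finally have le: "\<mu> G \<le> \<mu> (Xp - Z0)" .
  have "\<mu> Xp = \<mu> G + \<mu> (Xp \<inter> N)"
  proof -
    have "Xp = G \<union> (Xp \<inter> N)" by (auto simp: G_def)
    then show ?thesis using add[of G "Xp \<inter> N"] GA smA Xm N(3) by (auto simp: G_def)
  qed
  moreover have "\<mu> (Xp \<inter> N) = 0"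
  proof -
    have "measure m (Xp \<inter> N) \<le> measure m N" by (rule M.finite_measure_mono) (use N(3) in auto)
    moreover have "measure m N = 0" using N(2) by (simp add: measure_def)
    ultimately have "measure m (Xp \<inter> N) = 0" using measure_nonneg[of m] by (metis order_antisym)
    then show ?thesis using mum Xm N(3) by simp
  qed
  moreover have "\<mu> Xp = \<mu> (Xp - Z0) + \<mu> (Xp \<inter> Z0)"
  proof -
    have "Xp = (Xp - Z0) \<union> (Xp \<inter> Z0)" by auto
    then show ?thesis using add[of "Xp - Z0" "Xp \<inter> Z0"] XZA smA Xm Z0_meas by auto
  qed
  moreover have "\<mu> (Xp \<inter> Z0) > 0" using mum Z0_Xp_pos[OF Xm] Xm Z0_meas by simp
  ultimately show False using le by simp
qed


theorem proposition4:
  fixes B :: "nat \<Rightarrow> (F2 \<Rightarrow> bool) set"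
  assumes borel: "\<And>j. j \<in> {1..17} \<Longrightarrow> B j \<in> sets m"
    and disj: "\<And>j k. j \<in> {1..17} \<Longrightarrow> k \<in> {1..17} \<Longrightarrow> j \<noteq> k \<Longrightarrow> B j \<inter> B k = {}"
    and cover: "(\<Union>j\<in>{1..17}. B j) = Xp"
    and sep: "\<And>g x j. g \<in> gs16 \<Longrightarrow> j \<in> {1..17} \<Longrightarrow> x \<in> Xp \<Longrightarrow> \<not> (x \<in> B j \<and> act g x \<in> B j)"
  shows "paradoxical B"
proof -
  have a: "\<exists>c. satisfies_rule B c"
    by (rule partA[of B]) (rule disj, assumption+, rule cover, rule sep, assumption+)
  have b: "\<not> (\<exists>A \<mu> c. invariant_extension A \<mu> \<and> satisfies_rule B c \<and>
            (\<forall>j \<in> {1..17}. {x \<in> space m. c x = j} \<in> A))"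
    by (rule partB[of B]) (rule borel, assumption, rule disj, assumption+, rule cover)
  show ?thesis unfolding paradoxical_def using a b by blast
qed

end
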